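(* If $(\Sigma,*,\mathsf{emp})$ is a separation algebra, then $(\mathsf{HST},*,\mathsf{emphst})$ is a separation algebra, where $\mathsf{HST}=\mathsf{H}_\varepsilon.\Sigma$ with $\mathsf{H}_\varepsilon=(\Sigma^+.\mathsf{COM})^*.\Sigma^*$, the product $\mathit{hst}_1.s_1*\mathit{hst}_2.s_2$ is defined iff $\mathit{hst}_1=\mathit{hst}_2$ and $s_1*s_2$ is defined, in which case it equals $\mathit{hst}_1.(s_1*s_2)$, and $\mathsf{emphst}=\mathsf{H}_\varepsilon.\mathsf{emp}$.
   Context: A separation algebra $(\Sigma,*,\mathsf{emp})$ is a partial commutative monoid with a set of units $\mathsf{emp}$ such that every $s\in\Sigma$ has a unit $1$ with $s*1=s$ and $1*1'$ is undefined for distinct units $1,1'$. $\mathsf{COM}$ is an arbitrary (possibly infinite) set of commands, disjoint from $\Sigma$. Histories are finite words interleaving nonempty sequences of states with commands and ending in a state; concatenation is written with dots. *)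

theory Defs
  imports Main
begin

definition sep_algebra :: "'a set \<Rightarrow> ('a \<Rightarrow> 'a \<Rightarrow> 'a option) \<Rightarrow> 'a set \<Rightarrow> bool" where
  "sep_algebra S m E \<longleftrightarrow>
     (\<forall>a\<in>S. \<forall>b\<in>S. \<forall>c. m a b = Some c \<longrightarrow> c \<in> S) \<and>
     (\<forall>a\<in>S. \<forall>b\<in>S. m a b = m b a) \<and>
     (\<forall>a\<in>S. \<forall>b\<in>S. \<forall>c\<in>S.
        Option.bind (m a b) (\<lambda>ab. m ab c) = Option.bind (m b c) (\<lambda>bc. m a bc)) \<and>
     E \<subseteq> S \<and>
     (\<forall>a\<in>S. \<exists>u\<in>E. m a u = Some a) \<and>
     (\<forall>u\<in>E. \<forall>u'\<in>E. u \<noteq> u' \<longrightarrow> m u u' = None)"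

text \<open>Words over states ('s) and commands ('c); Inl = state, Inr = command.\<close>
definition hblocks :: "'s set \<Rightarrow> 'c set \<Rightarrow> ('s + 'c) list set" where
  "hblocks S C = {map Inl ss @ [Inr c] | ss c. ss \<noteq> [] \<and> set ss \<subseteq> S \<and> c \<in> C}"

text \<open>H_eps = (S^+ . COM)^* . S^*\<close>
definition H_eps :: "'s set \<Rightarrow> 'c set \<Rightarrow> ('s + 'c) list set" where
  "H_eps S C = {concat bs @ map Inl ss | bs ss. set bs \<subseteq> hblocks S C \<and> set ss \<subseteq> S}"

definition HST :: "'s set \<Rightarrow> 'c set \<Rightarrow> ('s + 'c) list set" where
  "HST S C = {h @ [Inl s] | h s. h \<in> H_eps S C \<and> s \<in> S}"

definition emphst :: "'s set \<Rightarrow> 'c set \<Rightarrow> 's set \<Rightarrow> ('s + 'c) list set" where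
  "emphst S C E = {h @ [Inl u] | h u. h \<in> H_eps S C \<and> u \<in> E}"

definition hst_mult :: "('s \<Rightarrow> 's \<Rightarrow> 's option) \<Rightarrow> ('s + 'c) list \<Rightarrow> ('s + 'c) list \<Rightarrow> ('s + 'c) list option" where
  "hst_mult m x y =
     (if x \<noteq> [] \<and> y \<noteq> [] \<and> butlast x = butlast y then
        (case (last x, last y) of
           (Inl s1, Inl s2) \<Rightarrow> map_option (\<lambda>s. butlast x @ [Inl s]) (m s1 s2)
         | _ \<Rightarrow> None)
      else None)"

end

theory Submission
  imports Defs
begin

lemma hm: "hst_mult m (h @ [Inl a]) (h' @ [Inl b]) =
  (if h = h' then map_option (\<lambda>s. h @ [Inl s]) (m a b) else None)"
  by (simp add: hst_mult_def)

lemma HST_E: "x \<in> HST S C \<Longrightarrow> (\<And>h s. x = h @ [Inl s] \<Longrightarrow> h \<in> H_eps S C \<Longrightarrow> s \<in> S \<Longrightarrow> P) \<Longrightarrow> P"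
  unfolding HST_def by blast

theorem lemma4p7:
  fixes S :: "'s set" and m :: "'s \<Rightarrow> 's \<Rightarrow> 's option" and E :: "'s set"
    and COM :: "'c set"
  assumes "sep_algebra S m E"
  shows "sep_algebra (HST S COM) (hst_mult m) (emphst S COM E)"
proof -
  note A = assms[unfolded sep_algebra_def]
  have cl: "\<And>a b c. a\<in>S \<Longrightarrow> b\<in>S \<Longrightarrow> m a b = Some c \<Longrightarrow> c \<in> S" using A by blast
  have cm: "\<And>a b. a\<in>S \<Longrightarrow> b\<in>S \<Longrightarrow> m a b = m b a" using A by blast
  have as: "\<And>a b c. a\<in>S \<Longrightarrow> b\<in>S \<Longrightarrow> c\<in>S \<Longrightarrow>
        Option.bind (m a b) (\<lambda>ab. m ab c) = Option.bind (m b c) (\<lambda>bc. m a bc)" using A by blast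
  have ES: "E \<subseteq> S" using A by blast
  have un: "\<And>a. a\<in>S \<Longrightarrow> \<exists>u\<in>E. m a u = Some a" using A by blast
  have ud: "\<And>u u'. u\<in>E \<Longrightarrow> u'\<in>E \<Longrightarrow> u \<noteq> u' \<Longrightarrow> m u u' = None" using A by blast
  have 1: "\<forall>a\<in>HST S COM. \<forall>b\<in>HST S COM. \<forall>c. hst_mult m a b = Some c \<longrightarrow> c \<in> HST S COM"
  proof (intro ballI allI impI)
    fix a b c assume "a \<in> HST S COM" "b \<in> HST S COM" "hst_mult m a b = Some c"
    then show "c \<in> HST S COM"
      by (elim HST_E) (auto simp: hm HST_def split: if_splits dest: cl)
  qed
  have 2: "\<forall>a\<in>HST S COM. \<forall>b\<in>HST S COM. hst_mult m a b = hst_mult m b a"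
  proof (intro ballI)
    fix a b assume "a \<in> HST S COM" "b \<in> HST S COM"
    then show "hst_mult m a b = hst_mult m b a"
      by (elim HST_E) (auto simp: hm dest: cm)
  qed
  have 3: "\<forall>a\<in>HST S COM. \<forall>b\<in>HST S COM. \<forall>c\<in>HST S COM.
        Option.bind (hst_mult m a b) (\<lambda>ab. hst_mult m ab c) = Option.bind (hst_mult m b c) (\<lambda>bc. hst_mult m a bc)"
  proof (intro ballI)
    fix x y z assume "x \<in> HST S COM" "y \<in> HST S COM" "z \<in> HST S COM"
    then obtain h1 a h2 b h3 c where x: "x = h1 @ [Inl a]" and y: "y = h2 @ [Inl b]" and z: "z = h3 @ [Inl c]"
      and S: "a \<in> S" "b \<in> S" "c \<in> S" by (metis HST_E)
    show "Option.bind (hst_mult m x y) (\<lambda>ab. hst_mult m ab z) = Option.bind (hst_mult m y z) (\<lambda>bc. hst_mult m x bc)"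
    proof (cases "h1 = h2 \<and> h2 = h3")
      case True
      have "Option.bind (m a b) (\<lambda>ab. m ab c) = Option.bind (m b c) (\<lambda>bc. m a bc)" using as S by blast
      then show ?thesis using True unfolding x y z
        by (cases "m a b"; cases "m b c"; simp add: hm)
    next
      case False
      then show ?thesis unfolding x y z
        by (cases "m a b"; cases "m b c"; auto simp: hm)
    qed
  qed
  have 4: "emphst S COM E \<subseteq> HST S COM" using ES unfolding emphst_def HST_def by blast
  have 5: "\<forall>a\<in>HST S COM. \<exists>u\<in>emphst S COM E. hst_mult m a u = Some a"
  proof
    fix x assume "x \<in> HST S COM"
    then obtain h a where x: "x = h @ [Inl a]" and h: "h \<in> H_eps S COM" and a: "a \<in> S" by (metis HST_E)
    obtain u where "u \<in> E" "m a u = Some a" using un a by blast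
    then show "\<exists>u\<in>emphst S COM E. hst_mult m x u = Some x"
      using h x by (intro bexI[of _ "h @ [Inl u]"]) (auto simp: hm emphst_def)
  qed
  have 6: "\<forall>u\<in>emphst S COM E. \<forall>u'\<in>emphst S COM E. u \<noteq> u' \<longrightarrow> hst_mult m u u' = None"
    unfolding emphst_def using ud by (fastforce simp: hm split: if_splits)
  show ?thesis unfolding sep_algebra_def using 1 2 3 4 5 6 by blast
qed

end
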